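(* Let $f:\{0,1\}^n\to\{0,1\}$ be symmetric and suppose there is $a\in\{0,1\}^n$ with $1\le|a|\le n-1$ such that $f(x)=f(x+a)$ for all $x\in\{0,1\}^n$. If $|a|$ is odd, then $f$ is constant. If $|a|$ is even, then $f$ is constant, PARITY, or the negation of PARITY.
   Context: $f$ is symmetric if $f(x)$ depends only on the Hamming weight $|x|$. Addition of bit strings is bitwise mod 2. $\mathrm{PARITY}(x)=1$ iff $|x|$ is odd. *)

theory Defs
  imports Main
begin

text \<open>Bit strings in {0,1}^n are boolean lists of length n (True = 1);
  Boolean functions take values in bool (True = 1).\<close>

definition cube :: "nat \<Rightarrow> bool list set" where
  "cube n = {x. length x = n}"

definition hweight :: "bool list \<Rightarrow> nat" where
  "hweight x = length (filter id x)"

definition xadd :: "bool list \<Rightarrow> bool list \<Rightarrow> bool list" where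
  "xadd x y = map2 (\<lambda>a b. a \<noteq> b) x y"

definition PARITY :: "bool list \<Rightarrow> bool" where
  "PARITY x = odd (hweight x)"

definition symmetric_on :: "nat \<Rightarrow> (bool list \<Rightarrow> bool) \<Rightarrow> bool" where
  "symmetric_on n f = (\<forall>x\<in>cube n. \<forall>y\<in>cube n. hweight x = hweight y \<longrightarrow> f x = f y)"

definition constant_on_cube :: "nat \<Rightarrow> (bool list \<Rightarrow> bool) \<Rightarrow> bool" where
  "constant_on_cube n f = (\<exists>c. \<forall>x\<in>cube n. f x = c)"

end

theory Submission
  imports Defs
begin

fun sel :: "nat \<Rightarrow> nat \<Rightarrow> bool list \<Rightarrow> bool list" where
  "sel i q [] = []"
| "sel i q (True # a) = (i > 0) # sel (i - 1) q a"
| "sel i q (False # a) = (q > 0) # sel i (q - 1) a"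

lemma sel_len: "length (sel i q a) = length a"
  by (induction i q a rule: sel.induct) auto

lemma sel_w: "i \<le> hweight a \<Longrightarrow> q \<le> length a - hweight a \<Longrightarrow>
   hweight (sel i q a) = i + q"
proof (induction i q a rule: sel.induct)
  case (1 i q) then show ?case by (simp add: hweight_def)
next
  case (2 i q a)
  have "length (filter id a) \<le> length a" by simp
  with 2 show ?case by (cases i) (auto simp: hweight_def)
next
  case (3 i q a)
  have "length (filter id a) \<le> length a" by simp
  with 3 show ?case by (cases q) (auto simp: hweight_def)
qed

lemma sel_xw: "i \<le> hweight a \<Longrightarrow> q \<le> length a - hweight a \<Longrightarrow>
   hweight (xadd (sel i q a) a) = (hweight a - i) + q"
proof (induction i q a rule: sel.induct)
  case (1 i q) then show ?case by (simp add: hweight_def xadd_def)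
next
  case (2 i q a)
  have "length (filter id a) \<le> length a" by simp
  with 2 show ?case by (cases i) (auto simp: hweight_def xadd_def)
next
  case (3 i q a)
  have "length (filter id a) \<le> length a" by simp
  with 3 show ?case by (cases q) (auto simp: hweight_def xadd_def)
qed

lemma hw_le: "hweight a \<le> length a"
  by (simp add: hweight_def)

lemma xadd_len: "length (xadd x a) = min (length x) (length a)"
  by (simp add: xadd_def)

theorem lemma7p8:
  fixes n :: nat and f :: "bool list \<Rightarrow> bool" and a :: "bool list"
  assumes sym: "symmetric_on n f"
    and a_cube: "a \<in> cube n"
    and a_low: "1 \<le> hweight a" and a_high: "hweight a \<le> n - 1"
    and inv: "\<forall>x\<in>cube n. f x = f (xadd x a)"
  shows "(odd (hweight a) \<longrightarrow> constant_on_cube n f) \<and>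
         (even (hweight a) \<longrightarrow>
            constant_on_cube n f \<or> (\<forall>x\<in>cube n. f x = PARITY x)
            \<or> (\<forall>x\<in>cube n. f x = (\<not> PARITY x)))"
proof -
  define w where "w = hweight a"
  have la: "length a = n" using a_cube by (simp add: cube_def)
  define rep where "rep k = replicate k True @ replicate (n - k) False" for k
  define g where "g k = f (rep k)" for k
  have rep_c: "k \<le> n \<Longrightarrow> rep k \<in> cube n" for k by (simp add: rep_def cube_def)
  have rep_w: "hweight (rep k) = k" for k by (simp add: rep_def hweight_def)
  have fg: "x \<in> cube n \<Longrightarrow> f x = g (hweight x)" for x
  proof -
    assume x: "x \<in> cube n"
    then have "hweight x \<le> n" using hw_le[of x] by (simp add: cube_def)
    then have "rep (hweight x) \<in> cube n" by (rule rep_c)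
    then show ?thesis using sym x rep_w[of "hweight x"] unfolding symmetric_on_def g_def by blast
  qed
  have selc: "sel i q a \<in> cube n" for i q by (simp add: cube_def sel_len la)
  have xc: "xadd (sel i q a) a \<in> cube n" for i q by (simp add: cube_def xadd_len sel_len la)
  have key: "g (hweight (sel i q a)) = g (hweight (xadd (sel i q a) a))" for i q
    using inv selc[of i q] xc[of i q] fg[of "sel i q a"] fg[of "xadd (sel i q a) a"] by simp
  have step: "m + 2 \<le> n \<Longrightarrow> g m = g (m + 2)" for m
  proof -
    assume m: "m + 2 \<le> n"
    define p where "p = max 1 (m + 2 - w)"
    define j where "j = p + w - 2 - m"
    have w1: "1 \<le> w" "w \<le> n - 1" using a_low a_high w_def by auto
    have p1: "1 \<le> p" "p \<le> n - w" "m + 2 - w \<le> p" "p \<le> m + 1"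
      using w1 m unfolding p_def by auto
    have j1: "j + 1 \<le> w" "p + w - j = m + 2" using p1 w1 unfolding j_def by auto
    have e1: "w - j + p = m + 2" "w - (j+1) + (p - 1) = m" using j1 p1 by auto
    have A: "g (j + p) = g (m + 2)"
      using key[of j p] sel_w[of j a p] sel_xw[of j a p] j1 p1 la w_def e1 by simp
    have B: "g (j + 1 + (p - 1)) = g m"
      using key[of "j+1" "p-1"] sel_w[of "j+1" a "p-1"] sel_xw[of "j+1" a "p-1"] j1 p1 la w_def e1
      by simp
    have "j + 1 + (p - 1) = j + p" using p1 by simp
    with A B show ?thesis by simp
  qed
  have par: "m \<le> n \<Longrightarrow> g m = g (m mod 2)" for m
  proof (induction m rule: less_induct)
    case (less m)
    show ?case
    proof (cases "m < 2")
      case True then show ?thesis by simp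
    next
      case False
      then have mm: "m - 2 + 2 = m" by simp
      then have "g (m - 2) = g m" using step[of "m - 2"] less.prems by simp
      moreover have "g (m - 2) = g ((m - 2) mod 2)"
        by (rule less.IH) (use False less.prems in auto)
      moreover have "(m - 2) mod 2 = m mod 2" using mm
        by (metis mod_add_self2)
      ultimately show ?thesis by simp
    qed
  qed
  have fx: "x \<in> cube n \<Longrightarrow> f x = g (hweight x mod 2)" for x
  proof -
    assume x: "x \<in> cube n"
    then have "hweight x \<le> n" using hw_le[of x] by (simp add: cube_def)
    then show ?thesis using fg[OF x] par[of "hweight x"] by simp
  qed
  have wn: "w \<le> n" "1 \<le> n" using a_low a_high w_def by auto
  have g0w: "g 0 = g w"
    using key[of 0 0] sel_w[of 0 a 0] sel_xw[of 0 a 0] la w_def by simp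
  show ?thesis
  proof (intro conjI impI)
    assume "odd (hweight a)"
    then have "g 0 = g 1" using g0w par[of w] wn w_def by (simp add: odd_iff_mod_2_eq_one)
    then have "x \<in> cube n \<Longrightarrow> f x = g 0" for x using fx[of x]
      by (cases "hweight x mod 2 = 0") (auto simp: mod2_eq_if)
    then show "constant_on_cube n f" unfolding constant_on_cube_def by blast
  next
    have h: "x \<in> cube n \<Longrightarrow> f x = (if PARITY x then g 1 else g 0)" for x
      using fx[of x] unfolding PARITY_def by (simp add: mod2_eq_if)
    show "constant_on_cube n f \<or> (\<forall>x\<in>cube n. f x = PARITY x)
            \<or> (\<forall>x\<in>cube n. f x = (\<not> PARITY x))"
    proof (cases "g 0 = g 1")
      case True
      then have "\<forall>x\<in>cube n. f x = g 0" using h by simp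
      then show ?thesis unfolding constant_on_cube_def by blast
    next
      case False
      then show ?thesis using h by (cases "g 1") auto
    qed
  qed
qed

end
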